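(* Consider DBSs in a plane with reference point $\mathbf{o}'$, whose locations at time $0$ form a homogeneous PPP of density $\lambda_0$. The serving DBS is the one nearest to $\mathbf{o}'$, at distance $u_0$; it flies towards $\mathbf{o}'$ at speed $v$ and hovers there. Conditioned on $u_0$, the other (interfering) DBSs at time $0$ form a PPP of density $\lambda_0$ outside $b(\mathbf{o}',u_0)$ and $0$ inside it, and each interfering DBS moves according to the RS mobility model with flight distance $R$ having cdf $F_R$ and pdf $f_R$. Then, conditioned on $u_0$, at time $t$ the interfering DBSs form an inhomogeneous PPP whose density at distance $u_{\mathbf{x}}$ from $\mathbf{o}'$ is $$\lambda(t;u_{\mathbf{x}},u_0)=\lambda_0\begin{cases}1 & u_0+vt\le u_{\mathbf{x}},\\ \beta(t,u_{\mathbf{x}},u_0) & |u_0-vt|\le u_{\mathbf{x}}\le u_0+vt,\\ \beta(t,u_{\mathbf{x}},u_0)\,\mathbf{1}\!\left(t>\frac{u_0}{v}\right) & 0\le u_{\mathbf{x}}\le|u_0-vt|,\end{cases}$$ with $$\beta(t,u_{\mathbf{x}},u_0)=F_R(u_{\mathbf{x}}-u_0)+(1-F_R(r))\frac{1}{\pi}\cos^{-1}\!\left(\frac{u_0^2-u_{\mathbf{x}}^2-r^2}{2u_{\mathbf{x}}r}\right)+\int_{|u_{\mathbf{x}}-u_0|}^{r} f_R(l)\frac{1}{\pi}\cos^{-1}\!\left(\frac{u_0^2-u_{\mathbf{x}}^2-l^2}{2u_{\mathbf{x}}l}\right)\mathrm{d}l,$$ where $r=\min\{vt,\,u_{\ma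thbf{x}}+u_0\}$.
   Context: $b(\mathbf{x},r)$ is the disc of radius $r$ centered at $\mathbf{x}$; $\mathbf{1}(\cdot)$ is the indicator; $F_R(x)=0$ for $x<0$. RS mobility model: each DBS, independently of the others and of its initial location, chooses a direction $\Theta\sim U[0,2\pi)$ and a distance $R\sim f_R$, moves distance $R$ in that direction along a straight line at constant speed $v$, then stops and hovers at the stopping location (so its net displacement at time $t$ is $\min\{vt,R\}$). *)

theory Defs
  imports "HOL-Probability.Probability"
begin

definition poisson_point_process ::
  "'w measure \<Rightarrow> 'a measure \<Rightarrow> ('w \<Rightarrow> 'a measure) \<Rightarrow> bool" where
  "poisson_point_process P L N \<longleftrightarrow>
     prob_space P \<and>
     (\<forall>w\<in>space P. sets (N w) = sets L \<and>
        (\<forall>B\<in>sets L. emeasure (N w) B = \<infinity> \<or> (\<exists>k::nat. emeasure (N w) B = of_nat k))) \<and>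
     (\<forall>B\<in>sets L. (\<lambda>w. emeasure (N w) B) \<in> borel_measurable P) \<and>
     (\<forall>B\<in>sets L. emeasure L B < \<infinity> \<longrightarrow>
        (\<forall>k::nat. measure P {w\<in>space P. emeasure (N w) B = of_nat k}
            = (enn2real (emeasure L B)) ^ k / fact k * exp (- enn2real (emeasure L B)))) \<and>
     (\<forall>(I::nat set) B. finite I \<longrightarrow> (\<forall>i\<in>I. B i \<in> sets L \<and> emeasure L (B i) < \<infinity>) \<longrightarrow>
        disjoint_family_on B I \<longrightarrow>
        prob_space.indep_vars P (\<lambda>_. borel) (\<lambda>i w. emeasure (N w) (B i)) I)"

text \<open>Net displacement in the RS mobility model at time t: heading theta, flight
distance l, speed v.\<close>
definition rs_displace :: "real \<Rightarrow> real \<Rightarrow> (real \<times> real) \<times> (real \<times> real) \<Rightarrow> real \<times> real" where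
  "rs_displace v t p = (case p of (x, (theta, l)) \<Rightarrow>
      x + min (v * t) l *\<^sub>R (cos theta, sin theta))"

definition beta_fn :: "(real \<Rightarrow> real) \<Rightarrow> (real \<Rightarrow> real) \<Rightarrow> real \<Rightarrow> real \<Rightarrow> real \<Rightarrow> real \<Rightarrow> real" where
  "beta_fn FR fR v t ux u0 =
     (let r = min (v * t) (ux + u0) in
        FR (ux - u0)
        + (1 - FR r) * (1 / pi) * arccos ((u0\<^sup>2 - ux\<^sup>2 - r\<^sup>2) / (2 * ux * r))
        + (LBINT l=\<bar>ux - u0\<bar>..r. fR l * (1 / pi) * arccos ((u0\<^sup>2 - ux\<^sup>2 - l\<^sup>2) / (2 * ux * l))))"

definition lambda_t :: "real \<Rightarrow> (real \<Rightarrow> real) \<Rightarrow> (real \<Rightarrow> real) \<Rightarrow> real \<Rightarrow> real \<Rightarrow> real \<Rightarrow> real \<Rightarrow> real" where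
  "lambda_t lam0 FR fR v t ux u0 = lam0 *
     (if u0 + v * t \<le> ux then 1
      else if \<bar>u0 - v * t\<bar> \<le> ux then beta_fn FR fR v t ux u0
      else beta_fn FR fR v t ux u0 * (if t > u0 / v then 1 else 0))"

end

theory Submission
  imports Defs
begin

lemma (in prob_space) indep_vars_cong_space:
  assumes "indep_vars M' X I" and "\<And>i w. i \<in> I \<Longrightarrow> w \<in> space M \<Longrightarrow> X i w = Y i w"
  shows "indep_vars M' Y I"
proof -
  have m: "\<forall>i\<in>I. random_variable (M' i) (X i)" and s: "indep_sets (\<lambda>i. { X i -` A \<inter> space M | A. A \<in> sets (M' i)}) I"
    using assms(1) unfolding indep_vars_def2 by auto
  have "\<forall>i\<in>I. random_variable (M' i) (Y i)"
  proof
    fix i assume i: "i \<in> I"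
    show "random_variable (M' i) (Y i)"
      using m i by (subst measurable_cong[where g="X i"]) (auto simp: assms(2))
  qed
  moreover have "indep_sets (\<lambda>i. { Y i -` A \<inter> space M | A. A \<in> sets (M' i)}) I"
  proof -
    have eqs: "\<And>i. i \<in> I \<Longrightarrow> { X i -` A \<inter> space M | A. A \<in> sets (M' i)} = { Y i -` A \<inter> space M | A. A \<in> sets (M' i)}"
    proof -
      fix i assume i: "i \<in> I"
      have "\<And>A. X i -` A \<inter> space M = Y i -` A \<inter> space M" using assms(2)[OF i] by auto
      then show "{ X i -` A \<inter> space M | A. A \<in> sets (M' i)} = { Y i -` A \<inter> space M | A. A \<in> sets (M' i)}"
        by simp
    qed
    have "indep_sets (\<lambda>i. { X i -` A \<inter> space M | A. A \<in> sets (M' i)}) I = indep_sets (\<lambda>i. { Y i -` A \<inter> space M | A. A \<in> sets (M' i)}) I"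
      by (rule indep_sets_cong[OF refl eqs])
    then show ?thesis using s by simp
  qed
  ultimately show ?thesis unfolding indep_vars_def2 by (intro conjI)
qed

lemma ppp_map:
  fixes P :: "'w measure" and L :: "'a measure" and L' :: "'b measure"
  assumes ppp: "poisson_point_process P L N"
    and f: "f \<in> measurable L M"
    and sL': "sets L' = sets M"
    and eq: "\<And>B. B \<in> sets M \<Longrightarrow> emeasure L' B = emeasure L (f -` B \<inter> space L)"
  shows "poisson_point_process P L' (\<lambda>w. distr (N w) M f)"
proof -
  note D = ppp[unfolded poisson_point_process_def]
  have prob: "prob_space P" using D by (rule conjunct1)
  have sN: "\<And>w. w \<in> space P \<Longrightarrow> sets (N w) = sets L"
    using D[THEN conjunct2, THEN conjunct1] by blast
  have cnt: "\<And>w B. w \<in> space P \<Longrightarrow> B \<in> sets L \<Longrightarrow> emeasure (N w) B = \<infinity> \<or> (\<exists>k::nat. emeasure (N w) B = of_nat k)"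
    using D[THEN conjunct2, THEN conjunct1] by blast
  have meas: "\<And>B. B \<in> sets L \<Longrightarrow> (\<lambda>w. emeasure (N w) B) \<in> borel_measurable P"
    using D[THEN conjunct2, THEN conjunct2, THEN conjunct1] by blast
  have pois: "\<And>B k. B \<in> sets L \<Longrightarrow> emeasure L B < \<infinity> \<Longrightarrow> measure P {w\<in>space P. emeasure (N w) B = of_nat k}
            = (enn2real (emeasure L B)) ^ k / fact k * exp (- enn2real (emeasure L B))"
    using D[THEN conjunct2, THEN conjunct2, THEN conjunct2, THEN conjunct1] by blast
  have ind: "\<And>(I::nat set) B. finite I \<Longrightarrow> (\<forall>i\<in>I. B i \<in> sets L \<and> emeasure L (B i) < \<infinity>) \<Longrightarrow>
        disjoint_family_on B I \<Longrightarrow>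
        prob_space.indep_vars P (\<lambda>_. borel) (\<lambda>i w. emeasure (N w) (B i)) I"
    using D[THEN conjunct2, THEN conjunct2, THEN conjunct2, THEN conjunct2] by blast
  have pre: "f -` B \<inter> space L \<in> sets L" if "B \<in> sets M" for B
    using f that by (rule measurable_sets)
  have fN: "f \<in> measurable (N w) M" if "w \<in> space P" for w
    using f measurable_cong_sets[OF sN[OF that] refl, of M] by simp
  have spN: "space (N w) = space L" if "w \<in> space P" for w
    using sN[OF that] by (rule sets_eq_imp_space_eq)
  have em: "emeasure (distr (N w) M f) B = emeasure (N w) (f -` B \<inter> space L)"
    if "w \<in> space P" "B \<in> sets M" for w B
    using emeasure_distr[OF fN[OF that(1)] that(2)] spN[OF that(1)] by simp
  show ?thesis
    unfolding poisson_point_process_def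
  proof (intro conjI ballI allI impI)
    show "prob_space P" by (fact prob)
  next
    fix w assume w: "w \<in> space P"
    show "sets (distr (N w) M f) = sets L'" using sL' by simp
    fix B assume "B \<in> sets L'"
    then have B: "B \<in> sets M" using sL' by simp
    show "emeasure (distr (N w) M f) B = \<infinity> \<or> (\<exists>k::nat. emeasure (distr (N w) M f) B = of_nat k)"
      using em[OF w B] cnt[OF w pre[OF B]] by simp
  next
    fix B assume "B \<in> sets L'"
    then have B: "B \<in> sets M" using sL' by simp
    show "(\<lambda>w. emeasure (distr (N w) M f) B) \<in> borel_measurable P"
      using meas[OF pre[OF B]] by (rule measurable_cong[THEN iffD1, rotated]) (simp add: em B)
  next
    fix B k assume "B \<in> sets L'" "emeasure L' B < \<infinity>"
    then have B: "B \<in> sets M" and fin: "emeasure L (f -` B \<inter> space L) < \<infinity>" using sL' eq by auto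
    have "{w\<in>space P. emeasure (distr (N w) M f) B = of_nat k} = {w\<in>space P. emeasure (N w) (f -` B \<inter> space L) = of_nat k}"
      using em[OF _ B] by auto
    then show "measure P {w\<in>space P. emeasure (distr (N w) M f) B = of_nat k}
            = (enn2real (emeasure L' B)) ^ k / fact k * exp (- enn2real (emeasure L' B))"
      using pois[OF pre[OF B] fin, of k] eq[OF B] by simp
  next
    fix I :: "nat set" and B
    assume I: "finite I" and BI: "\<forall>i\<in>I. B i \<in> sets L' \<and> emeasure L' (B i) < \<infinity>"
      and dj: "disjoint_family_on B I"
    let ?C = "\<lambda>i. f -` B i \<inter> space L"
    have "\<forall>i\<in>I. ?C i \<in> sets L \<and> emeasure L (?C i) < \<infinity>"
    proof
      fix i assume i: "i \<in> I"
      then have Bi: "B i \<in> sets M" using BI sL' by auto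
      show "?C i \<in> sets L \<and> emeasure L (?C i) < \<infinity>"
        using pre[OF Bi] eq[OF Bi] BI i by auto
    qed
    moreover have "disjoint_family_on ?C I"
      using dj unfolding disjoint_family_on_def by auto
    ultimately have "prob_space.indep_vars P (\<lambda>_. borel) (\<lambda>i w. emeasure (N w) (?C i)) I"
      by (rule ind[OF I])
    then show "prob_space.indep_vars P (\<lambda>_. borel) (\<lambda>i w. emeasure (distr (N w) M f) (B i)) I"
    proof (rule prob_space.indep_vars_cong_space[OF prob])
      fix i w assume "i \<in> I" "w \<in> space P"
      moreover then have "B i \<in> sets M" using BI sL' by auto
      ultimately show "emeasure (N w) (?C i) = emeasure (distr (N w) M f) (B i)"
        using em by simp
    qed
  qed
qed

lemma cos_lt_set:
  assumes a: "-1 \<le> a" "a \<le> 1"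
  shows "{s\<in>{0..<2*pi}. cos s < a} = {arccos a<..<2*pi - arccos a}"
proof -
  have ac: "0 \<le> arccos a" "arccos a \<le> pi" "cos (arccos a) = a"
    using a by (auto intro: arccos_lbound arccos_ubound cos_arccos)
  show ?thesis
  proof (intro set_eqI iffI)
    fix s assume s: "s \<in> {s\<in>{0..<2*pi}. cos s < a}"
    show "s \<in> {arccos a<..<2*pi - arccos a}"
    proof (cases "s \<le> pi")
      case True
      then have "arccos a < s" using cos_mono_less_eq[of s "arccos a"] s ac by auto
      moreover have "s < 2*pi - arccos a"
      proof (rule ccontr)
        assume "\<not> s < 2*pi - arccos a"
        then have "s = pi" "arccos a = pi" using True ac by auto
        then show False using s ac by auto
      qed
      ultimately show ?thesis by auto
    next
      case False
      have "cos s = cos (2*pi - s)" by (simp add: cos_diff)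
      then have "arccos a < 2*pi - s" using cos_mono_less_eq[of "2*pi - s" "arccos a"] s ac False by auto
      then show ?thesis using False ac by auto
    qed
  next
    fix s assume s: "s \<in> {arccos a<..<2*pi - arccos a}"
    then have s02: "0 \<le> s" "s < 2*pi" using ac by auto
    have "cos s < a"
    proof (cases "s \<le> pi")
      case True
      then show ?thesis using cos_mono_less_eq[of s "arccos a"] s ac by auto
    next
      case False
      have "cos s = cos (2*pi - s)" by (simp add: cos_diff)
      then show ?thesis using cos_mono_less_eq[of "2*pi - s" "arccos a"] s ac False by auto
    qed
    then show "s \<in> {s\<in>{0..<2*pi}. cos s < a}" using s02 by auto
  qed
qed

lemma cos_lt_measure:
  fixes a :: real
  shows "(\<integral>\<^sup>+s. indicator {0..<2*pi} s * indicator {s. cos s < a} s \<partial>lborel)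
     = ennreal (2*pi - 2 * arccos (max (-1) (min 1 a)))"
proof -
  have eq: "(\<integral>\<^sup>+s. indicator {0..<2*pi} s * indicator {s. cos s < a} s \<partial>lborel)
     = emeasure lborel {s\<in>{0..<2*pi}. cos s < a}"
  proof -
    have f: "(\<lambda>s. indicator {0..<2*pi} s * indicator {s. cos s < a} s) = (indicator {s\<in>{0..<2*pi}. cos s < a} :: real \<Rightarrow> ennreal)"
      by (auto simp: fun_eq_iff split: split_indicator)
    have m: "{s\<in>{0..<2*pi}. cos s < a} \<in> sets lborel" by simp
    show ?thesis unfolding f by (rule nn_integral_indicator[OF m])
  qed
  show ?thesis
  proof (cases "a < -1")
    case True
    have "\<not> cos s < a" for s using cos_ge_minus_one[of s] True by linarith
    then have E: "{s\<in>{0..<2*pi}. cos s < a} = {}" by auto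
    show ?thesis unfolding eq E using True by simp
  next
    case nt: False
    show ?thesis
    proof (cases "a > 1")
      case True
      have E: "{s\<in>{0..<2*pi}. cos s < a} = {0..<2*pi}" using True
        by (auto intro: le_less_trans[OF cos_le_one])
      show ?thesis unfolding eq E using True by simp
    next
      case False
      then have a: "-1 \<le> a" "a \<le> 1" using nt by auto
      have "arccos a \<le> pi" "0 \<le> arccos a" using a by (auto intro: arccos_lbound arccos_ubound)
      then show ?thesis unfolding eq cos_lt_set[OF a] using a
        by (simp add: max_def min_def)
    qed
  qed
qed

lemma periodic_shift:
  fixes h :: "real \<Rightarrow> ennreal"
  assumes h[measurable]: "h \<in> borel_measurable borel" and per: "\<And>x. h (x + 2*pi) = h x"
    and ph: "0 \<le> \<phi>" "\<phi> \<le> 2*pi"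
  shows "(\<integral>\<^sup>+\<theta>. indicator {0..<2*pi} \<theta> * h (\<theta> - \<phi>) \<partial>lborel) = (\<integral>\<^sup>+\<theta>. indicator {0..<2*pi} \<theta> * h \<theta> \<partial>lborel)"
proof -
  have "(\<integral>\<^sup>+\<theta>. indicator {0..<2*pi} \<theta> * h (\<theta> - \<phi>) \<partial>lborel)
      = (\<integral>\<^sup>+s. indicator {0..<2*pi} (\<phi> + 1 * s) * h ((\<phi> + 1 * s) - \<phi>) \<partial>lborel)"
    using nn_integral_real_affine[of "\<lambda>\<theta>. indicator {0..<2*pi} \<theta> * h (\<theta> - \<phi>)" 1 \<phi>] by simp
  also have "\<dots> = (\<integral>\<^sup>+s. indicator {-\<phi>..<0} s * h s + indicator {0..<2*pi-\<phi>} s * h s \<partial>lborel)"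
    using ph by (intro nn_integral_cong) (auto split: split_indicator)
  also have "\<dots> = (\<integral>\<^sup>+s. indicator {-\<phi>..<0} s * h s \<partial>lborel) + (\<integral>\<^sup>+s. indicator {0..<2*pi-\<phi>} s * h s \<partial>lborel)"
    by (rule nn_integral_add) auto
  also have "(\<integral>\<^sup>+s. indicator {-\<phi>..<0} s * h s \<partial>lborel)
      = (\<integral>\<^sup>+u. indicator {-\<phi>..<0} (-2*pi + 1 * u) * h (-2*pi + 1 * u) \<partial>lborel)"
    using nn_integral_real_affine[of "\<lambda>s. indicator {-\<phi>..<0} s * h s" 1 "-2*pi"] by simp
  also have "\<dots> = (\<integral>\<^sup>+u. indicator {2*pi-\<phi>..<2*pi} u * h u \<partial>lborel)"
  proof (intro nn_integral_cong)
    fix u :: real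
    have "h (-2*pi + 1 * u) = h u" using per[of "-2*pi + u"] by simp
    then show "indicator {-\<phi>..<0} (-2*pi + 1 * u) * h (-2*pi + 1 * u) = indicator {2*pi-\<phi>..<2*pi} u * h u"
      by (auto split: split_indicator)
  qed
  also have "(\<integral>\<^sup>+u. indicator {2*pi-\<phi>..<2*pi} u * h u \<partial>lborel) + (\<integral>\<^sup>+s. indicator {0..<2*pi-\<phi>} s * h s \<partial>lborel)
      = (\<integral>\<^sup>+s. indicator {2*pi-\<phi>..<2*pi} s * h s + indicator {0..<2*pi-\<phi>} s * h s \<partial>lborel)"
    by (rule nn_integral_add[symmetric]) auto
  also have "\<dots> = (\<integral>\<^sup>+\<theta>. indicator {0..<2*pi} \<theta> * h \<theta> \<partial>lborel)"
    using ph by (intro nn_integral_cong) (auto split: split_indicator)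
  finally show ?thesis .
qed

definition qf :: "real \<Rightarrow> real \<Rightarrow> real \<Rightarrow> real" where
  "qf u0 ux m = (if m = 0 then (if u0 < ux then 1 else 0)
      else arccos (max (-1) (min 1 ((u0\<^sup>2 - ux\<^sup>2 - m\<^sup>2) / (2 * ux * m)))) / pi)"

lemma norm_sq_expand:
  fixes ux m \<phi> \<theta> :: real
  shows "(norm ((ux * cos \<phi>, ux * sin \<phi>) - m *\<^sub>R (cos \<theta>, sin \<theta>)))\<^sup>2 = ux\<^sup>2 + m\<^sup>2 - 2 * ux * m * cos (\<theta> - \<phi>)"
proof -
  have "(norm ((ux * cos \<phi>, ux * sin \<phi>) - m *\<^sub>R (cos \<theta>, sin \<theta>)))\<^sup>2
      = (ux * cos \<phi> - m * cos \<theta>)\<^sup>2 + (ux * sin \<phi> - m * sin \<theta>)\<^sup>2"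
    by (simp add: norm_Pair)
  also have "\<dots> = ux\<^sup>2 * ((sin \<phi>)\<^sup>2 + (cos \<phi>)\<^sup>2) + m\<^sup>2 * ((sin \<theta>)\<^sup>2 + (cos \<theta>)\<^sup>2) - 2 * ux * m * (cos \<theta> * cos \<phi> + sin \<theta> * sin \<phi>)"
    by algebra
  also have "\<dots> = ux\<^sup>2 + m\<^sup>2 - 2 * ux * m * cos (\<theta> - \<phi>)"
    by (simp only: sin_cos_squared_add cos_diff mult_1_right)
  finally show ?thesis .
qed

lemma angle_integral:
  fixes z :: "real \<times> real"
  assumes z: "norm z = ux" and ux: "0 < ux" and m: "0 \<le> m" and u0: "0 < u0"
  shows "(\<integral>\<^sup>+\<theta>. ennreal (indicator {0..<2*pi} \<theta> / (2*pi) * indicator {\<theta>. u0 < norm (z - m *\<^sub>R (cos \<theta>, sin \<theta>))} \<theta>) \<partial>lborel)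
     = ennreal (qf u0 ux m)"
proof (cases "m = 0")
  case True
  have "(\<integral>\<^sup>+\<theta>. ennreal (indicator {0..<2*pi} \<theta> / (2*pi) * indicator {\<theta>. u0 < norm (z - m *\<^sub>R (cos \<theta>, sin \<theta>))} \<theta>) \<partial>lborel)
      = (\<integral>\<^sup>+\<theta>. ennreal (1 / (2*pi) * (if u0 < ux then 1 else 0)) * indicator {0..<2*pi} \<theta> \<partial>lborel)"
    using True z by (intro nn_integral_cong) (auto simp: zero_prod_def[symmetric] split: split_indicator)
  also have "\<dots> = ennreal (1 / (2*pi) * (if u0 < ux then 1 else 0)) * ennreal (2*pi)"
    by (subst nn_integral_cmult_indicator) auto
  also have "\<dots> = ennreal (qf u0 ux m)"
    using True by (simp add: qf_def ennreal_mult'[symmetric])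
  finally show ?thesis .
next
  case False
  then have m0: "0 < m" using m by simp
  have "(fst z / ux)\<^sup>2 + (snd z / ux)\<^sup>2 = 1"
  proof -
    have e: "(norm z)\<^sup>2 = (fst z)\<^sup>2 + (snd z)\<^sup>2" by (cases z) (simp add: norm_Pair)
    have "(fst z / ux)\<^sup>2 + (snd z / ux)\<^sup>2 = ((fst z)\<^sup>2 + (snd z)\<^sup>2) / ux\<^sup>2"
      by (simp add: power_divide add_divide_distrib)
    also have "\<dots> = 1" using e z ux by (metis div_self power_not_zero less_irrefl)
    finally show ?thesis .
  qed
  then obtain \<phi> where ph: "0 \<le> \<phi>" "\<phi> < 2*pi" "fst z / ux = cos \<phi>" "snd z / ux = sin \<phi>"
    by (rule sincos_total_2pi)
  have zph: "z = (ux * cos \<phi>, ux * sin \<phi>)"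
    using ph(3,4) ux by (cases z) (simp add: field_simps)
  define a where "a = (ux\<^sup>2 + m\<^sup>2 - u0\<^sup>2) / (2 * ux * m)"
  have cond: "u0 < norm (z - m *\<^sub>R (cos \<theta>, sin \<theta>)) \<longleftrightarrow> cos (\<theta> - \<phi>) < a" for \<theta>
  proof -
    have "u0 < norm (z - m *\<^sub>R (cos \<theta>, sin \<theta>)) \<longleftrightarrow> u0\<^sup>2 < (norm (z - m *\<^sub>R (cos \<theta>, sin \<theta>)))\<^sup>2"
      using u0 by (smt (verit) norm_ge_zero power_mono power_strict_mono zero_less_numeral pos2 power_less_imp_less_base)
    also have "\<dots> \<longleftrightarrow> u0\<^sup>2 < ux\<^sup>2 + m\<^sup>2 - 2 * ux * m * cos (\<theta> - \<phi>)"
      unfolding zph norm_sq_expand ..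
    also have "\<dots> \<longleftrightarrow> cos (\<theta> - \<phi>) < a"
      unfolding a_def using ux m0 by (simp add: field_simps)
    finally show ?thesis .
  qed
  have "(\<integral>\<^sup>+\<theta>. ennreal (indicator {0..<2*pi} \<theta> / (2*pi) * indicator {\<theta>. u0 < norm (z - m *\<^sub>R (cos \<theta>, sin \<theta>))} \<theta>) \<partial>lborel)
      = (\<integral>\<^sup>+\<theta>. ennreal (1 / (2*pi)) * (indicator {0..<2*pi} \<theta> * indicator {s. cos s < a} (\<theta> - \<phi>)) \<partial>lborel)"
    using cond by (intro nn_integral_cong) (auto split: split_indicator)
  also have "\<dots> = ennreal (1 / (2*pi)) * (\<integral>\<^sup>+\<theta>. indicator {0..<2*pi} \<theta> * indicator {s. cos s < a} (\<theta> - \<phi>) \<partial>lborel)"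
    by (rule nn_integral_cmult) simp
  also have "(\<integral>\<^sup>+\<theta>. indicator {0..<2*pi} \<theta> * indicator {s. cos s < a} (\<theta> - \<phi>) \<partial>lborel)
      = (\<integral>\<^sup>+\<theta>. indicator {0..<2*pi} \<theta> * indicator {s. cos s < a} \<theta> \<partial>lborel)"
    by (rule periodic_shift[where h="indicator {s. cos s < a}"]) (use ph in \<open>auto simp: indicator_def\<close>)
  also have "\<dots> = ennreal (2*pi - 2 * arccos (max (-1) (min 1 a)))"
    by (rule cos_lt_measure)
  also have "ennreal (1 / (2*pi)) * ennreal (2*pi - 2 * arccos (max (-1) (min 1 a))) = ennreal (qf u0 ux m)"
  proof -
    let ?b = "max (-1) (min 1 a)"
    have b: "-1 \<le> ?b" "?b \<le> 1" by auto
    have c: "max (-1) (min 1 ((u0\<^sup>2 - ux\<^sup>2 - m\<^sup>2) / (2 * ux * m))) = - ?b"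
    proof -
      have "(u0\<^sup>2 - ux\<^sup>2 - m\<^sup>2) / (2 * ux * m) = - a"
        unfolding a_def minus_divide_left by (simp add: algebra_simps)
      moreover have "max (-1) (min 1 (- a)) = - ?b" by (simp add: max_def min_def)
      ultimately show ?thesis by simp
    qed
    have "arccos (- ?b) = pi - arccos ?b" using b by (rule arccos_minus)
    moreover have bp: "arccos ?b \<le> pi" using b by (intro arccos_ubound)
    ultimately have q: "qf u0 ux m = (pi - arccos ?b) / pi" using m0 c by (simp add: qf_def)
    have "ennreal (1 / (2*pi)) * ennreal (2*pi - 2 * arccos ?b) = ennreal (1 / (2*pi) * (2*pi - 2 * arccos ?b))"
      by (rule ennreal_mult''[symmetric]) (use bp in simp)
    also have "1 / (2*pi) * (2*pi - 2 * arccos ?b) = (pi - arccos ?b) / pi"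
      by (simp add: field_simps)
    finally show ?thesis using q by simp
  qed
  finally show ?thesis .
qed

lemma cc_le_m1:
  fixes u0 ux m :: real
  assumes "0 < ux" "0 < m" "u0\<^sup>2 \<le> (ux - m)\<^sup>2"
  shows "(u0\<^sup>2 - ux\<^sup>2 - m\<^sup>2) / (2 * ux * m) \<le> -1"
proof -
  have p: "0 < 2 * ux * m" using assms by simp
  have "u0\<^sup>2 - ux\<^sup>2 - m\<^sup>2 \<le> - (2 * ux * m)" using assms(3) by (simp add: power2_diff)
  then show ?thesis using p by (simp add: pos_divide_le_eq)
qed

lemma cc_ge_m1:
  fixes u0 ux m :: real
  assumes "0 < ux" "0 < m" "(ux - m)\<^sup>2 \<le> u0\<^sup>2"
  shows "-1 \<le> (u0\<^sup>2 - ux\<^sup>2 - m\<^sup>2) / (2 * ux * m)"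
proof -
  have p: "0 < 2 * ux * m" using assms by simp
  have "- (2 * ux * m) \<le> u0\<^sup>2 - ux\<^sup>2 - m\<^sup>2" using assms(3) by (simp add: power2_diff)
  then show ?thesis using p by (simp add: pos_le_divide_eq)
qed

lemma cc_ge_1:
  fixes u0 ux m :: real
  assumes "0 < ux" "0 < m" "(ux + m)\<^sup>2 \<le> u0\<^sup>2"
  shows "1 \<le> (u0\<^sup>2 - ux\<^sup>2 - m\<^sup>2) / (2 * ux * m)"
proof -
  have p: "0 < 2 * ux * m" using assms by simp
  have "2 * ux * m \<le> u0\<^sup>2 - ux\<^sup>2 - m\<^sup>2" using assms(3) by (simp add: power2_sum)
  then show ?thesis using p by (simp add: pos_le_divide_eq)
qed

lemma cc_le_1:
  fixes u0 ux m :: real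
  assumes "0 < ux" "0 < m" "u0\<^sup>2 \<le> (ux + m)\<^sup>2"
  shows "(u0\<^sup>2 - ux\<^sup>2 - m\<^sup>2) / (2 * ux * m) \<le> 1"
proof -
  have p: "0 < 2 * ux * m" using assms by simp
  have "u0\<^sup>2 - ux\<^sup>2 - m\<^sup>2 \<le> 2 * ux * m" using assms(3) by (simp add: power2_sum)
  then show ?thesis using p by (simp add: pos_divide_le_eq)
qed

lemma sq_le: "0 \<le> (a::real) \<Longrightarrow> a \<le> \<bar>b\<bar> \<Longrightarrow> a\<^sup>2 \<le> b\<^sup>2"
  by (metis abs_le_square_iff abs_of_nonneg)

lemma qf_one_a:
  assumes "0 < ux" "0 < u0" "u0 < ux" "0 \<le> m" "m \<le> ux - u0"
  shows "qf u0 ux m = 1"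
proof (cases "m = 0")
  case True then show ?thesis using assms by (simp add: qf_def)
next
  case False
  then have m: "0 < m" using assms by simp
  have "u0\<^sup>2 \<le> (ux - m)\<^sup>2" using assms by (intro sq_le) auto
  then have "(u0\<^sup>2 - ux\<^sup>2 - m\<^sup>2) / (2 * ux * m) \<le> -1" using assms m by (intro cc_le_m1) auto
  then have "max (-1) (min 1 ((u0\<^sup>2 - ux\<^sup>2 - m\<^sup>2) / (2 * ux * m))) = -1" by simp
  then show ?thesis using m by (simp add: qf_def)
qed

lemma qf_one_b:
  assumes "0 < ux" "0 < u0" "ux + u0 \<le> m"
  shows "qf u0 ux m = 1"
proof -
  have m: "0 < m" using assms by simp
  have "u0\<^sup>2 \<le> (ux - m)\<^sup>2" using assms by (intro sq_le) auto
  then have "(u0\<^sup>2 - ux\<^sup>2 - m\<^sup>2) / (2 * ux * m) \<le> -1" using assms m by (intro cc_le_m1) auto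
  then have "max (-1) (min 1 ((u0\<^sup>2 - ux\<^sup>2 - m\<^sup>2) / (2 * ux * m))) = -1" by simp
  then show ?thesis using m by (simp add: qf_def)
qed

lemma qf_zero:
  assumes "0 < ux" "0 < u0" "ux < u0" "0 \<le> m" "m \<le> u0 - ux"
  shows "qf u0 ux m = 0"
proof (cases "m = 0")
  case True then show ?thesis using assms by (simp add: qf_def)
next
  case False
  then have m: "0 < m" using assms by simp
  have "(ux + m)\<^sup>2 \<le> u0\<^sup>2" using assms by (intro sq_le) auto
  then have "1 \<le> (u0\<^sup>2 - ux\<^sup>2 - m\<^sup>2) / (2 * ux * m)" using assms m by (intro cc_ge_1) auto
  then have "max (-1) (min 1 ((u0\<^sup>2 - ux\<^sup>2 - m\<^sup>2) / (2 * ux * m))) = 1" by simp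
  then show ?thesis using m by (simp add: qf_def)
qed

lemma qf_mid:
  assumes "0 < ux" "0 < u0" "\<bar>ux - u0\<bar> \<le> m" "m \<le> ux + u0" "0 < m"
  shows "qf u0 ux m = arccos ((u0\<^sup>2 - ux\<^sup>2 - m\<^sup>2) / (2 * ux * m)) / pi"
    and "-1 \<le> (u0\<^sup>2 - ux\<^sup>2 - m\<^sup>2) / (2 * ux * m)" "(u0\<^sup>2 - ux\<^sup>2 - m\<^sup>2) / (2 * ux * m) \<le> 1"
proof -
  have "(ux - m)\<^sup>2 \<le> u0\<^sup>2" unfolding abs_le_square_iff[symmetric] using assms by auto
  then show a: "-1 \<le> (u0\<^sup>2 - ux\<^sup>2 - m\<^sup>2) / (2 * ux * m)" using assms by (intro cc_ge_m1) auto
  have "u0\<^sup>2 \<le> (ux + m)\<^sup>2" using assms by (intro sq_le) auto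
  then show b: "(u0\<^sup>2 - ux\<^sup>2 - m\<^sup>2) / (2 * ux * m) \<le> 1" using assms by (intro cc_le_1) auto
  show "qf u0 ux m = arccos ((u0\<^sup>2 - ux\<^sup>2 - m\<^sup>2) / (2 * ux * m)) / pi"
    using a b assms by (simp add: qf_def max_def min_def)
qed

lemma qf_nonneg: "0 \<le> qf u0 ux m"
  unfolding qf_def by (auto intro!: divide_nonneg_pos arccos_lbound)

lemma clamp_arccos_borel[measurable]: "(\<lambda>x::real. arccos (max (-1) (min 1 x))) \<in> borel_measurable borel"
  by (intro borel_measurable_continuous_onI continuous_intros) auto

lemma qf_borel[measurable]: "qf u0 ux \<in> borel_measurable borel"
  unfolding qf_def by measurable

lemma clamp_arccos_meas[measurable (raw)]:
  "f \<in> borel_measurable M \<Longrightarrow> (\<lambda>x. arccos (max (-1) (min 1 (f x :: real)))) \<in> borel_measurable M"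
  using measurable_compose[OF _ clamp_arccos_borel] by blast

lemma clamp_arccos_bounds: "0 \<le> arccos (max (-1) (min 1 (x::real)))" "arccos (max (-1) (min 1 x)) \<le> pi"
  by (auto intro!: arccos_lbound arccos_ubound)

locale rdist =
  fixes fR FR :: "real \<Rightarrow> real"
  assumes fR_meas[measurable]: "fR \<in> borel_measurable lborel"
    and fR_nonneg: "\<And>l. fR l \<ge> 0"
    and fR_neg: "\<And>l. l < 0 \<Longrightarrow> fR l = 0"
    and fR_int: "integrable lborel fR"
    and fR_one: "(\<integral>l. fR l \<partial>lborel) = 1"
    and FR_def: "\<And>x. FR x = (\<integral>l\<in>{..x}. fR l \<partial>lborel)"
begin

lemma fR_borel[measurable]: "fR \<in> borel_measurable borel"
  using fR_meas by simp

lemma set_int: "S \<in> sets lborel \<Longrightarrow> set_integrable lborel S fR"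
  unfolding set_integrable_def by (intro integrable_mult_indicator fR_int)

lemma nn_set: assumes S: "S \<in> sets lborel"
  shows "(\<integral>\<^sup>+l. ennreal (fR l * indicator S l) \<partial>lborel) = ennreal (\<integral>l\<in>S. fR l \<partial>lborel)"
proof -
  have "(\<integral>\<^sup>+l. ennreal (fR l * indicator S l) \<partial>lborel) = (\<integral>\<^sup>+l. ennreal (indicator S l *\<^sub>R fR l) \<partial>lborel)"
    by (intro nn_integral_cong) (simp add: mult.commute)
  also have "\<dots> = ennreal (\<integral>l. indicator S l *\<^sub>R fR l \<partial>lborel)"
    using set_int[OF S] unfolding set_integrable_def
    by (intro nn_integral_eq_integral) (auto simp: fR_nonneg split: split_indicator)
  finally show ?thesis by (simp add: set_lebesgue_integral_def)
qed

lemma set_nonneg: "0 \<le> (\<integral>l\<in>S. fR l \<partial>lborel)"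
  unfolding set_lebesgue_integral_def
  by (intro Bochner_Integration.integral_nonneg) (simp add: fR_nonneg)

lemma nn_total: "(\<integral>\<^sup>+l. ennreal (fR l) \<partial>lborel) = 1"
  using nn_integral_eq_integral[OF fR_int] fR_nonneg fR_one by simp

lemma FR_nonneg: "0 \<le> FR x"
  unfolding FR_def by (rule set_nonneg)

lemma FR_negative: assumes "x < 0" shows "FR x = 0"
proof -
  have "(\<integral>l\<in>{..x}. fR l \<partial>lborel) = (\<integral>l\<in>{..x}. 0 \<partial>lborel)"
    using assms by (intro set_lebesgue_integral_cong) (auto intro: fR_neg)
  then show ?thesis unfolding FR_def by simp
qed

lemma tail: "(\<integral>l\<in>{r<..}. fR l \<partial>lborel) = 1 - FR r"
proof -
  have "(\<integral>l. fR l \<partial>lborel) = (\<integral>l. indicator {..r} l *\<^sub>R fR l + indicator {r<..} l *\<^sub>R fR l \<partial>lborel)"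
    by (intro Bochner_Integration.integral_cong) (auto split: split_indicator)
  also have "\<dots> = (\<integral>l\<in>{..r}. fR l \<partial>lborel) + (\<integral>l\<in>{r<..}. fR l \<partial>lborel)"
    unfolding set_lebesgue_integral_def
    by (intro Bochner_Integration.integral_add) (use set_int[of "{..r}"] set_int[of "{r<..}"] in \<open>auto simp: set_integrable_def\<close>)
  finally show ?thesis using fR_one unfolding FR_def by simp
qed

lemma FR_le1: "FR x \<le> 1"
  using tail[of x] set_nonneg[of "{x<..}"] by simp


lemma K_A:
  assumes ux: "0 < ux" and u0: "0 < u0" and V: "0 \<le> V" "V < ux - u0"
  shows "(\<integral>\<^sup>+l. ennreal (fR l * qf u0 ux (min V l)) \<partial>lborel) = 1"
proof -
  have "(\<integral>\<^sup>+l. ennreal (fR l * qf u0 ux (min V l)) \<partial>lborel) = (\<integral>\<^sup>+l. ennreal (fR l) \<partial>lborel)"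
  proof (intro nn_integral_cong)
    fix l :: real
    show "ennreal (fR l * qf u0 ux (min V l)) = ennreal (fR l)"
    proof (cases "l < 0")
      case True then show ?thesis by (simp add: fR_neg)
    next
      case False
      then have "qf u0 ux (min V l) = 1" using assms by (intro qf_one_a) auto
      then show ?thesis by simp
    qed
  qed
  then show ?thesis using nn_total by simp
qed

lemma K_B:
  assumes ux: "0 < ux" and u0: "0 < u0" and V: "0 \<le> V" "V < u0 - ux"
  shows "(\<integral>\<^sup>+l. ennreal (fR l * qf u0 ux (min V l)) \<partial>lborel) = 0"
proof -
  have "(\<lambda>l. ennreal (fR l * qf u0 ux (min V l))) = (\<lambda>l. 0)"
  proof (rule ext)
    fix l :: real
    show "ennreal (fR l * qf u0 ux (min V l)) = 0"
    proof (cases "l < 0")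
      case True then show ?thesis by (simp add: fR_neg)
    next
      case False
      then have "qf u0 ux (min V l) = 0" using assms by (intro qf_zero) auto
      then show ?thesis by simp
    qed
  qed
  then show ?thesis by simp
qed


lemma K_C:
  assumes ux: "0 < ux" "ux \<noteq> u0" and u0: "0 < u0" and V: "\<bar>ux - u0\<bar> \<le> V"
  defines "r \<equiv> min V (ux + u0)"
  shows "(\<integral>\<^sup>+l. ennreal (fR l * qf u0 ux (min V l)) \<partial>lborel) =
    ennreal (FR (ux - u0) + (1 - FR r) * (1 / pi) * arccos ((u0\<^sup>2 - ux\<^sup>2 - r\<^sup>2) / (2 * ux * r))
        + (LBINT l=\<bar>ux - u0\<bar>..r. fR l * (1 / pi) * arccos ((u0\<^sup>2 - ux\<^sup>2 - l\<^sup>2) / (2 * ux * l))))"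
proof -
  define d where "d = \<bar>ux - u0\<bar>"
  have d0: "0 < d" using ux unfolding d_def by simp
  have dr: "d \<le> r" and rV: "r \<le> V" and ru: "r \<le> ux + u0"
    using V u0 ux unfolding r_def d_def by auto
  have r0: "0 < r" using d0 dr by simp
  define cl where "cl l = arccos (max (-1) (min 1 ((u0\<^sup>2 - ux\<^sup>2 - l\<^sup>2) / (2 * ux * l))))" for l
  have cl_meas[measurable]: "cl \<in> borel_measurable borel" unfolding cl_def by measurable
  define G1 where "G1 l = ennreal (fR l * indicator {..d} l) * ennreal (if u0 < ux then 1 else 0)" for l
  define G2 where "G2 l = ennreal (indicator {d<..<r} l *\<^sub>R (fR l * (1 / pi) * cl l))" for l
  define G3 where "G3 l = ennreal (fR l * indicator {x. r \<le> x \<and> d < x} l) * ennreal (qf u0 ux r)" for l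
  have [measurable]: "G1 \<in> borel_measurable borel" "G2 \<in> borel_measurable borel" "G3 \<in> borel_measurable borel"
    unfolding G1_def G2_def G3_def by measurable
  have pw: "ennreal (fR l * qf u0 ux (min V l)) = G1 l + G2 l + G3 l" for l
  proof (cases "l < 0")
    case True then show ?thesis by (simp add: fR_neg G1_def G2_def G3_def)
  next
    case False
    show ?thesis
    proof (cases "l \<le> d")
      case True
      then have ml: "min V l = l" using dr rV by simp
      have "qf u0 ux l = (if u0 < ux then 1 else 0)"
      proof (cases "u0 < ux")
        case True then show ?thesis using \<open>l \<le> d\<close> False ux u0 unfolding d_def by (simp add: qf_one_a)
      next
        case nlt: False
        then have "ux < u0" using ux by simp
        then show ?thesis using \<open>l \<le> d\<close> False ux u0 nlt unfolding d_def by (simp add: qf_zero)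
      qed
      then show ?thesis using True ml d0 by (simp add: G1_def G2_def G3_def ennreal_mult'[symmetric])
    next
      case ld: False
      show ?thesis
      proof (cases "l < r")
        case True
        then have ml: "min V l = l" using rV by simp
        have l0: "0 < l" using ld d0 by simp
        have pm: "\<bar>ux - u0\<bar> \<le> l" "l \<le> ux + u0" using ld True ru unfolding d_def by auto
        note qm = qf_mid[OF ux(1) u0 pm l0]
        note q = qm(1) and b = qm(2,3)
        have "max (-1) (min 1 ((u0\<^sup>2 - ux\<^sup>2 - l\<^sup>2) / (2 * ux * l))) = (u0\<^sup>2 - ux\<^sup>2 - l\<^sup>2) / (2 * ux * l)"
          using b by linarith
        then have "cl l = arccos ((u0\<^sup>2 - ux\<^sup>2 - l\<^sup>2) / (2 * ux * l))"
          unfolding cl_def by simp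
        then show ?thesis using True ld ml q by (simp add: G1_def G2_def G3_def)
      next
        case False
        have "qf u0 ux (min V l) = qf u0 ux r"
        proof (cases "V \<le> ux + u0")
          case True
          then have "r = V" unfolding r_def by simp
          then show ?thesis using False by simp
        next
          case nle: False
          then have "r = ux + u0" unfolding r_def by simp
          then show ?thesis using False nle ux u0 by (simp add: qf_one_b)
        qed
        then show ?thesis using False ld
          by (simp add: G1_def G2_def G3_def ennreal_mult[symmetric] fR_nonneg qf_nonneg)
      qed
    qed
  qed
  have "(\<integral>\<^sup>+l. ennreal (fR l * qf u0 ux (min V l)) \<partial>lborel) = (\<integral>\<^sup>+l. G1 l + G2 l + G3 l \<partial>lborel)"
    using pw by simp
  also have "\<dots> = (\<integral>\<^sup>+l. G1 l \<partial>lborel) + (\<integral>\<^sup>+l. G2 l \<partial>lborel) + (\<integral>\<^sup>+l. G3 l \<partial>lborel)"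
    by (simp add: nn_integral_add)
  finally have split: "(\<integral>\<^sup>+l. ennreal (fR l * qf u0 ux (min V l)) \<partial>lborel)
      = (\<integral>\<^sup>+l. G1 l \<partial>lborel) + (\<integral>\<^sup>+l. G2 l \<partial>lborel) + (\<integral>\<^sup>+l. G3 l \<partial>lborel)" .
  have I1: "(\<integral>\<^sup>+l. G1 l \<partial>lborel) = ennreal (FR (ux - u0))"
  proof -
    have "(\<integral>\<^sup>+l. G1 l \<partial>lborel) = (\<integral>\<^sup>+l. ennreal (fR l * indicator {..d} l) \<partial>lborel) * ennreal (if u0 < ux then 1 else 0)"
      unfolding G1_def by (rule nn_integral_multc) measurable
    also have "\<dots> = ennreal (FR d) * ennreal (if u0 < ux then 1 else 0)"
      by (simp add: nn_set FR_def)
    also have "\<dots> = ennreal (FR (ux - u0))"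
      using FR_negative[of "ux - u0"] ux unfolding d_def by auto
    finally show ?thesis .
  qed
  have I3: "(\<integral>\<^sup>+l. G3 l \<partial>lborel) = ennreal ((1 - FR r) * qf u0 ux r)"
  proof -
    have "(\<integral>\<^sup>+l. G3 l \<partial>lborel) = (\<integral>\<^sup>+l. ennreal (fR l * indicator {x. r \<le> x \<and> d < x} l) \<partial>lborel) * ennreal (qf u0 ux r)"
      unfolding G3_def by (rule nn_integral_multc) measurable
    also have "(\<integral>\<^sup>+l. ennreal (fR l * indicator {x. r \<le> x \<and> d < x} l) \<partial>lborel)
        = (\<integral>\<^sup>+l. ennreal (fR l * indicator {r<..} l) \<partial>lborel)"
    proof (rule nn_integral_cong_AE)
      show "AE x in lborel. ennreal (fR x * indicator {x. r \<le> x \<and> d < x} x) = ennreal (fR x * indicator {r<..} x)"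
        using AE_lborel_singleton[of r]
        by eventually_elim (use dr in \<open>auto split: split_indicator\<close>)
    qed
    also have "\<dots> = ennreal (1 - FR r)"
      by (simp add: nn_set tail)
    finally show ?thesis
      using FR_le1[of r] qf_nonneg[of u0 ux r] by (simp add: ennreal_mult)
  qed
  define I2 where "I2 = (LINT l:{d<..<r}|lborel. fR l * (1 / pi) * cl l)"
  have I2int: "set_integrable lborel {d<..<r} (\<lambda>l. fR l * (1 / pi) * cl l)"
    unfolding set_integrable_def
  proof (rule Bochner_Integration.integrable_bound[OF fR_int])
    show "(\<lambda>l. indicator {d<..<r} l *\<^sub>R (fR l * (1 / pi) * cl l)) \<in> borel_measurable lborel"
      by measurable
    show "AE x in lborel. norm (indicator {d<..<r} x *\<^sub>R (fR x * (1 / pi) * cl x)) \<le> norm (fR x)"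
    proof (rule AE_I2)
      fix x
      have c: "0 \<le> cl x" "cl x \<le> pi" unfolding cl_def by (rule clamp_arccos_bounds)+
      have "cl x * fR x \<le> pi * fR x" by (rule mult_right_mono[OF c(2) fR_nonneg])
      then have "fR x * (1 / pi) * cl x \<le> fR x"
        by (simp add: field_simps)
      moreover have "0 \<le> fR x * (1 / pi) * cl x" using c fR_nonneg[of x] by simp
      ultimately show "norm (indicator {d<..<r} x *\<^sub>R (fR x * (1 / pi) * cl x)) \<le> norm (fR x)"
        using fR_nonneg[of x] by (auto split: split_indicator)
    qed
  qed
  have I2nn: "0 \<le> I2"
    unfolding I2_def set_lebesgue_integral_def
    by (intro Bochner_Integration.integral_nonneg) (auto simp: cl_def clamp_arccos_bounds fR_nonneg split: split_indicator)
  have I2v: "(\<integral>\<^sup>+l. G2 l \<partial>lborel) = ennreal I2"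
    unfolding G2_def I2_def set_lebesgue_integral_def
    using I2int unfolding set_integrable_def
    by (intro nn_integral_eq_integral) (auto simp: cl_def clamp_arccos_bounds fR_nonneg split: split_indicator)
  have I2eq: "I2 = (LBINT l=\<bar>ux - u0\<bar>..r. fR l * (1 / pi) * arccos ((u0\<^sup>2 - ux\<^sup>2 - l\<^sup>2) / (2 * ux * l)))"
  proof -
    have "(LBINT l=\<bar>ux - u0\<bar>..r. fR l * (1 / pi) * arccos ((u0\<^sup>2 - ux\<^sup>2 - l\<^sup>2) / (2 * ux * l)))
        = (LINT l:{d<..<r}|lborel. fR l * (1 / pi) * arccos ((u0\<^sup>2 - ux\<^sup>2 - l\<^sup>2) / (2 * ux * l)))"
      using dr unfolding interval_lebesgue_integral_def d_def by simp
    also have "\<dots> = I2"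
      unfolding I2_def
    proof (rule set_lebesgue_integral_cong)
      show "{d<..<r} \<in> sets lborel" by simp
      show "\<forall>x. x \<in> {d<..<r} \<longrightarrow> fR x * (1 / pi) * arccos ((u0\<^sup>2 - ux\<^sup>2 - x\<^sup>2) / (2 * ux * x)) = fR x * (1 / pi) * cl x"
      proof (intro allI impI)
        fix l assume l: "l \<in> {d<..<r}"
        then have "-1 \<le> (u0\<^sup>2 - ux\<^sup>2 - l\<^sup>2) / (2 * ux * l)" "(u0\<^sup>2 - ux\<^sup>2 - l\<^sup>2) / (2 * ux * l) \<le> 1"
          using qf_mid[of ux u0 l] ux u0 ru d0 unfolding d_def by auto
        then have "max (-1) (min 1 ((u0\<^sup>2 - ux\<^sup>2 - l\<^sup>2) / (2 * ux * l))) = (u0\<^sup>2 - ux\<^sup>2 - l\<^sup>2) / (2 * ux * l)"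
          by linarith
        then show "fR l * (1 / pi) * arccos ((u0\<^sup>2 - ux\<^sup>2 - l\<^sup>2) / (2 * ux * l)) = fR l * (1 / pi) * cl l"
          unfolding cl_def by simp
      qed
    qed
    finally show ?thesis by simp
  qed
  have qr: "qf u0 ux r = arccos ((u0\<^sup>2 - ux\<^sup>2 - r\<^sup>2) / (2 * ux * r)) / pi"
    using qf_mid[of ux u0 r] ux u0 dr ru r0 unfolding d_def by auto
  have "(\<integral>\<^sup>+l. ennreal (fR l * qf u0 ux (min V l)) \<partial>lborel)
      = ennreal (FR (ux - u0)) + ennreal I2 + ennreal ((1 - FR r) * qf u0 ux r)"
    using split I1 I3 I2v by simp
  also have "\<dots> = ennreal (FR (ux - u0) + I2 + (1 - FR r) * qf u0 ux r)"
    using FR_nonneg[of "ux - u0"] I2nn FR_le1[of r] qf_nonneg[of u0 ux r]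
    by (simp add: ennreal_plus)
  also have "FR (ux - u0) + I2 + (1 - FR r) * qf u0 ux r =
      FR (ux - u0) + (1 - FR r) * (1 / pi) * arccos ((u0\<^sup>2 - ux\<^sup>2 - r\<^sup>2) / (2 * ux * r))
        + (LBINT l=\<bar>ux - u0\<bar>..r. fR l * (1 / pi) * arccos ((u0\<^sup>2 - ux\<^sup>2 - l\<^sup>2) / (2 * ux * l)))"
    using qr I2eq by simp
  finally show ?thesis .
qed


lemma K_lambda:
  assumes lam0: "0 < lam0" and v: "0 < v" and t: "0 \<le> t" and u0: "0 < u0"
    and ux: "0 < ux" "ux \<noteq> u0" "ux \<noteq> u0 + v * t"
  shows "ennreal lam0 * (\<integral>\<^sup>+l. ennreal (fR l * qf u0 ux (min (v * t) l)) \<partial>lborel)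
      = ennreal (lambda_t lam0 FR fR v t ux u0)"
proof -
  have V: "0 \<le> v * t" using v t by simp
  have tv: "u0 / v < t \<longleftrightarrow> u0 < v * t" using v by (simp add: pos_divide_less_eq mult.commute)
  have KC: "(\<integral>\<^sup>+l. ennreal (fR l * qf u0 ux (min (v * t) l)) \<partial>lborel) = ennreal (beta_fn FR fR v t ux u0)"
    if "\<bar>ux - u0\<bar> \<le> v * t"
    unfolding beta_fn_def Let_def by (rule K_C[OF ux(1,2) u0 that])
  show ?thesis
  proof (cases "u0 + v * t \<le> ux")
    case True
    then have "v * t < ux - u0" using ux by auto
    then show ?thesis using K_A[OF ux(1) u0 V] True by (simp add: lambda_t_def)
  next
    case c1: False
    show ?thesis
    proof (cases "\<bar>u0 - v * t\<bar> \<le> ux")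
      case True
      then have "\<bar>ux - u0\<bar> \<le> v * t" using c1 by auto
      then show ?thesis using KC c1 True lam0 by (simp add: lambda_t_def ennreal_mult')
    next
      case c2: False
      show ?thesis
      proof (cases "u0 < v * t")
        case True
        then have "\<bar>ux - u0\<bar> \<le> v * t" using c2 ux u0 by (auto simp: abs_if split: if_splits)
        then show ?thesis using KC c1 c2 True tv lam0 by (simp add: lambda_t_def ennreal_mult')
      next
        case False
        then have "v * t < u0 - ux" using c2 by auto
        then show ?thesis using K_B[OF ux(1) u0 V] c1 c2 False tv by (simp add: lambda_t_def)
      qed
    qed
  qed
qed

end

context rdist
begin

lemma Kint:
  fixes y o' :: "real \<times> real"
  assumes u0: "0 < u0" and y: "0 < dist y o'" and V: "0 \<le> V"
  shows "(\<integral>\<^sup>+w. ennreal (indicator {x. u0 < dist x o'} (- (min V (snd w) *\<^sub>R (cos (fst w), sin (fst w))) + y)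
            * (indicator {0..<2*pi} (fst w) / (2*pi)) * fR (snd w)) \<partial>lborel)
       = (\<integral>\<^sup>+l. ennreal (fR l * qf u0 (dist y o') (min V l)) \<partial>lborel)"
proof -
  define F where "F = (\<lambda>w::real\<times>real. ennreal (indicator {x. u0 < dist x o'} (- (min V (snd w) *\<^sub>R (cos (fst w), sin (fst w))) + y)
            * (indicator {0..<2*pi} (fst w) / (2*pi)) * fR (snd w)))"
  have Fm[measurable]: "F \<in> borel_measurable (lborel \<Otimes>\<^sub>M lborel)"
    unfolding F_def by measurable
  have "integral\<^sup>N lborel F = integral\<^sup>N (lborel \<Otimes>\<^sub>M lborel) F"
    by (simp only: lborel_prod)
  also have "\<dots> = (\<integral>\<^sup>+l. \<integral>\<^sup>+\<theta>. F (\<theta>, l) \<partial>lborel \<partial>lborel)"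
    by (rule lborel_pair.nn_integral_snd[symmetric, OF Fm])
  also have "\<dots> = (\<integral>\<^sup>+l. ennreal (fR l * qf u0 (dist y o') (min V l)) \<partial>lborel)"
  proof (rule nn_integral_cong)
    fix l :: real
    show "(\<integral>\<^sup>+\<theta>. F (\<theta>, l) \<partial>lborel) = ennreal (fR l * qf u0 (dist y o') (min V l))"
    proof (cases "l < 0")
      case True
      then show ?thesis by (simp add: F_def fR_neg)
    next
      case False
      have "(\<integral>\<^sup>+\<theta>. F (\<theta>, l) \<partial>lborel) = (\<integral>\<^sup>+\<theta>. ennreal (fR l) * ennreal (indicator {0..<2*pi} \<theta> / (2*pi) *
           indicator {\<theta>. u0 < norm ((y - o') - min V l *\<^sub>R (cos \<theta>, sin \<theta>))} \<theta>) \<partial>lborel)"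
      proof (rule nn_integral_cong)
        fix \<theta> :: real
        have gen: "\<And>b::real\<times>real. dist (- b + y) o' = norm ((y - o') - b)"
          by (simp add: dist_norm algebra_simps)
        have "dist (- (min V l *\<^sub>R (cos \<theta>, sin \<theta>)) + y) o' = norm ((y - o') - min V l *\<^sub>R (cos \<theta>, sin \<theta>))"
          by (rule gen)
        then show "F (\<theta>, l) = ennreal (fR l) * ennreal (indicator {0..<2*pi} \<theta> / (2*pi) *
           indicator {\<theta>. u0 < norm ((y - o') - min V l *\<^sub>R (cos \<theta>, sin \<theta>))} \<theta>)"
          unfolding F_def by (simp add: ennreal_mult'[symmetric] fR_nonneg mult_ac split: split_indicator)
      qed
      also have "\<dots> = ennreal (fR l) * (\<integral>\<^sup>+\<theta>. ennreal (indicator {0..<2*pi} \<theta> / (2*pi) *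
           indicator {\<theta>. u0 < norm ((y - o') - min V l *\<^sub>R (cos \<theta>, sin \<theta>))} \<theta>) \<partial>lborel)"
        by (rule nn_integral_cmult) measurable
      also have "\<dots> = ennreal (fR l) * ennreal (qf u0 (dist y o') (min V l))"
        using angle_integral[of "y - o'" "dist y o'" "min V l" u0] y V False u0
        by (simp add: dist_norm)
      also have "\<dots> = ennreal (fR l * qf u0 (dist y o') (min V l))"
        by (simp add: ennreal_mult'[symmetric] fR_nonneg)
      finally show ?thesis .
    qed
  qed
  finally show ?thesis unfolding F_def .
qed


lemma sphere_null: "sphere (c::real\<times>real) r \<in> null_sets lborel"
  using negligible_sphere[of c r]
  by (auto simp: null_sets_completion_iff negligible_iff_null_sets negligible_convex_frontier)

lemma main_eq:
  fixes o' :: "real \<times> real" and B :: "(real \<times> real) set"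
  assumes lam0: "0 < lam0" and v: "0 < v" and t: "0 \<le> t" and u0: "0 < u0"
    and B[measurable]: "B \<in> sets borel"
  shows "(\<integral>\<^sup>+p. ennreal (lam0 * indicator {y. dist y o' > u0} (fst p)
                   * (indicator {0..<2*pi} (fst (snd p)) / (2*pi)) * fR (snd (snd p)))
             * indicator B (fst p + min (v * t) (snd (snd p)) *\<^sub>R (cos (fst (snd p)), sin (fst (snd p)))) \<partial>lborel)
       = (\<integral>\<^sup>+y. ennreal (lambda_t lam0 FR fR v t (dist y o') u0) * indicator B y \<partial>lborel)"
proof -
  define V where "V = v * t"
  have V0: "0 \<le> V" using v t unfolding V_def by simp
  define d where "d w = min V (snd w) *\<^sub>R (cos (fst w), sin (fst w))" for w :: "real \<times> real"
  have dm[measurable]: "d \<in> borel_measurable borel" unfolding d_def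
    by (intro borel_measurable_continuous_onI continuous_intros)
  have dm2[measurable]: "d \<in> borel \<Otimes>\<^sub>M borel \<rightarrow>\<^sub>M borel" using dm by (simp add: borel_prod)
  have sets_eq: "sets (lborel \<Otimes>\<^sub>M lborel :: ((real\<times>real)\<times>(real\<times>real)) measure) = sets (borel \<Otimes>\<^sub>M (borel \<Otimes>\<^sub>M borel))"
  proof -
    have e: "borel \<Otimes>\<^sub>M borel = (borel :: (real\<times>real) measure)" by (rule borel_prod)
    show ?thesis unfolding e by (rule sets_pair_measure_cong) simp_all
  qed
  have sets_eq2: "sets (lborel :: (real\<times>real) measure) = sets (borel \<Otimes>\<^sub>M borel)"
    by (subst borel_prod) simp
  define G where "G x w = ennreal (lam0 * indicator {y. dist y o' > u0} x
                   * (indicator {0..<2*pi} (fst w) / (2*pi)) * fR (snd w)) * indicator B (x + d w)"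
    for x :: "real \<times> real" and w :: "real \<times> real"
  have Gm[measurable]: "(\<lambda>p. G (fst p) (snd p)) \<in> borel_measurable (lborel \<Otimes>\<^sub>M lborel)"
    unfolding G_def measurable_cong_sets[OF sets_eq refl] by measurable
  define H where "H y w = ennreal (lam0 * indicator {y. dist y o' > u0} (- d w + y)
                   * (indicator {0..<2*pi} (fst w) / (2*pi)) * fR (snd w)) * indicator B y"
    for y :: "real \<times> real" and w :: "real \<times> real"
  have Hm[measurable]: "case_prod H \<in> borel_measurable (lborel \<Otimes>\<^sub>M lborel)"
    unfolding H_def case_prod_beta measurable_cong_sets[OF sets_eq refl] by measurable
  have "(\<integral>\<^sup>+p. ennreal (lam0 * indicator {y. dist y o' > u0} (fst p)
                   * (indicator {0..<2*pi} (fst (snd p)) / (2*pi)) * fR (snd (snd p)))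
             * indicator B (fst p + min (v * t) (snd (snd p)) *\<^sub>R (cos (fst (snd p)), sin (fst (snd p)))) \<partial>lborel)
      = (\<integral>\<^sup>+p. G (fst p) (snd p) \<partial>lborel)"
    unfolding G_def d_def V_def ..
  also have "\<dots> = (\<integral>\<^sup>+p. G (fst p) (snd p) \<partial>(lborel \<Otimes>\<^sub>M lborel))"
    by (simp only: lborel_prod)
  also have "\<dots> = (\<integral>\<^sup>+w. \<integral>\<^sup>+x. G x w \<partial>lborel \<partial>lborel)"
    using lborel_pair.nn_integral_snd[OF Gm] by simp
  also have "\<dots> = (\<integral>\<^sup>+w. \<integral>\<^sup>+y. H y w \<partial>lborel \<partial>lborel)"
  proof (rule nn_integral_cong)
    fix w :: "real \<times> real"
    have "(\<integral>\<^sup>+x. G x w \<partial>lborel) = (\<integral>\<^sup>+x. G x w \<partial>(distr lborel borel ((+) (- d w))))"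
      by (simp add: lborel_distr_plus)
    also have "\<dots> = (\<integral>\<^sup>+y. G (- d w + y) w \<partial>lborel)"
      by (rule nn_integral_distr) (auto simp: G_def)
    also have "\<dots> = (\<integral>\<^sup>+y. H y w \<partial>lborel)"
      by (simp add: G_def H_def)
    finally show "(\<integral>\<^sup>+x. G x w \<partial>lborel) = (\<integral>\<^sup>+y. H y w \<partial>lborel)" .
  qed
  also have "\<dots> = (\<integral>\<^sup>+y. \<integral>\<^sup>+w. H y w \<partial>lborel \<partial>lborel)"
    by (rule lborel_pair.Fubini'[OF Hm])
  also have "\<dots> = (\<integral>\<^sup>+y. indicator B y * (ennreal lam0 *
        (\<integral>\<^sup>+w. ennreal (indicator {x. u0 < dist x o'} (- (min V (snd w) *\<^sub>R (cos (fst w), sin (fst w))) + y)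
            * (indicator {0..<2*pi} (fst w) / (2*pi)) * fR (snd w)) \<partial>lborel)) \<partial>lborel)"
  proof (rule nn_integral_cong)
    fix y :: "real \<times> real"
    have "(\<integral>\<^sup>+w. H y w \<partial>lborel) = (\<integral>\<^sup>+w. (indicator B y * ennreal lam0) *
        ennreal (indicator {x. u0 < dist x o'} (- (min V (snd w) *\<^sub>R (cos (fst w), sin (fst w))) + y)
            * (indicator {0..<2*pi} (fst w) / (2*pi)) * fR (snd w)) \<partial>lborel)"
      using lam0 by (intro nn_integral_cong) (auto simp: H_def d_def ennreal_mult'[symmetric] mult_ac split: split_indicator)
    also have "\<dots> = (indicator B y * ennreal lam0) * (\<integral>\<^sup>+w.
        ennreal (indicator {x. u0 < dist x o'} (- (min V (snd w) *\<^sub>R (cos (fst w), sin (fst w))) + y)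
            * (indicator {0..<2*pi} (fst w) / (2*pi)) * fR (snd w)) \<partial>lborel)"
      by (rule nn_integral_cmult) (unfold measurable_cong_sets[OF sets_eq2 refl], measurable)
    finally show "(\<integral>\<^sup>+w. H y w \<partial>lborel) = indicator B y * (ennreal lam0 *
        (\<integral>\<^sup>+w. ennreal (indicator {x. u0 < dist x o'} (- (min V (snd w) *\<^sub>R (cos (fst w), sin (fst w))) + y)
            * (indicator {0..<2*pi} (fst w) / (2*pi)) * fR (snd w)) \<partial>lborel))"
      by (simp add: mult.assoc)
  qed
  also have "\<dots> = (\<integral>\<^sup>+y. ennreal (lambda_t lam0 FR fR v t (dist y o') u0) * indicator B y \<partial>lborel)"
  proof (rule nn_integral_cong_AE)
    have "AE y in lborel. y \<notin> sphere o' 0 \<and> y \<notin> sphere o' u0 \<and> y \<notin> sphere o' (u0 + v * t)"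
      using AE_not_in[OF sphere_null[of o' 0]] AE_not_in[OF sphere_null[of o' u0]]
        AE_not_in[OF sphere_null[of o' "u0 + v * t"]]
      by eventually_elim auto
    then show "AE y in lborel. indicator B y * (ennreal lam0 *
        (\<integral>\<^sup>+w. ennreal (indicator {x. u0 < dist x o'} (- (min V (snd w) *\<^sub>R (cos (fst w), sin (fst w))) + y)
            * (indicator {0..<2*pi} (fst w) / (2*pi)) * fR (snd w)) \<partial>lborel))
        = ennreal (lambda_t lam0 FR fR v t (dist y o') u0) * indicator B y"
    proof eventually_elim
      case (elim y)
      then have ne: "0 < dist y o'" "dist y o' \<noteq> u0" "dist y o' \<noteq> u0 + v * t"
        by (auto simp: dist_commute)
      have "ennreal lam0 *
        (\<integral>\<^sup>+w. ennreal (indicator {x. u0 < dist x o'} (- (min V (snd w) *\<^sub>R (cos (fst w), sin (fst w))) + y)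
            * (indicator {0..<2*pi} (fst w) / (2*pi)) * fR (snd w)) \<partial>lborel)
          = ennreal (lambda_t lam0 FR fR v t (dist y o') u0)"
      proof -
        have "(\<integral>\<^sup>+w. ennreal (indicator {x. u0 < dist x o'} (- (min V (snd w) *\<^sub>R (cos (fst w), sin (fst w))) + y)
            * (indicator {0..<2*pi} (fst w) / (2*pi)) * fR (snd w)) \<partial>lborel)
          = (\<integral>\<^sup>+l. ennreal (fR l * qf u0 (dist y o') (min V l)) \<partial>lborel)"
          by (rule Kint[OF u0 ne(1) V0])
        then show ?thesis using K_lambda[OF lam0 v t u0 ne] unfolding V_def by simp
      qed
      then show ?case by (simp add: mult.commute)
    qed
  qed
  finally show ?thesis .
qed

end

lemma arccos_out: assumes "1 < \<bar>y\<bar>" shows "arccos y = arccos 2"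
proof -
  have "(\<lambda>x. 0 \<le> x \<and> x \<le> pi \<and> cos x = y) = (\<lambda>x. 0 \<le> x \<and> x \<le> pi \<and> cos x = 2)"
  proof (rule ext)
    fix x :: real
    have "\<bar>cos x\<bar> \<le> 1" using cos_le_one[of x] cos_ge_minus_one[of x] by (simp add: abs_le_iff)
    then have "cos x \<noteq> y" using assms by (metis not_le)
    moreover have "cos x \<noteq> 2" using cos_le_one[of x] by linarith
    ultimately show "(0 \<le> x \<and> x \<le> pi \<and> cos x = y) = (0 \<le> x \<and> x \<le> pi \<and> cos x = 2)"
      by simp
  qed
  then show ?thesis unfolding arccos_def by simp
qed

lemma arccos_borel: "arccos \<in> borel_measurable borel"
proof -
  have "arccos = (\<lambda>y. if y \<in> {-1..1} then arccos (max (-1) (min 1 y)) else arccos 2)"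
  proof (rule ext)
    fix y :: real
    show "arccos y = (if y \<in> {-1..1} then arccos (max (-1) (min 1 y)) else arccos 2)"
      using arccos_out[of y] by (auto simp: max_def min_def)
  qed
  also have "\<dots> \<in> borel_measurable borel" by measurable
  finally show ?thesis .
qed

lemma arccos_meas[measurable (raw)]:
  "f \<in> borel_measurable M \<Longrightarrow> (\<lambda>x. arccos (f x :: real)) \<in> borel_measurable M"
  using measurable_compose[OF _ arccos_borel] by blast

lemma interval_int_meas:
  fixes a b :: "real \<Rightarrow> real" and k :: "real \<Rightarrow> real \<Rightarrow> real"
  assumes [measurable]: "a \<in> borel_measurable borel" "b \<in> borel_measurable borel"
    and [measurable]: "case_prod k \<in> borel_measurable (borel \<Otimes>\<^sub>M lborel)"
  shows "(\<lambda>x. LBINT l=a x..b x. k x l) \<in> borel_measurable borel"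
proof -
  have "(\<lambda>x. LBINT l=a x..b x. k x l) = (\<lambda>x. if a x \<le> b x
      then (\<integral>l. (if a x < l \<and> l < b x then k x l else 0) \<partial>lborel)
      else - (\<integral>l. (if b x < l \<and> l < a x then k x l else 0) \<partial>lborel))"
  proof (rule ext)
    fix x
    have e1: "(\<lambda>l. indicator {a x<..<b x} l * k x l) = (\<lambda>l. if a x < l \<and> l < b x then k x l else 0)"
      by (auto simp: fun_eq_iff split: split_indicator)
    have e2: "(\<lambda>l. indicator {b x<..<a x} l * k x l) = (\<lambda>l. if b x < l \<and> l < a x then k x l else 0)"
      by (auto simp: fun_eq_iff split: split_indicator)
    show "(LBINT l=a x..b x. k x l) = (if a x \<le> b x
      then (\<integral>l. (if a x < l \<and> l < b x then k x l else 0) \<partial>lborel)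
      else - (\<integral>l. (if b x < l \<and> l < a x then k x l else 0) \<partial>lborel))"
      unfolding interval_lebesgue_integral_def set_lebesgue_integral_def
      by (simp add: e1 e2)
  qed
  also have "\<dots> \<in> borel_measurable borel" by measurable
  finally show ?thesis .
qed

context rdist
begin

lemma FR_borel[measurable]: "FR \<in> borel_measurable borel"
proof -
  have "FR = (\<lambda>x. \<integral>l. (if l \<le> x then fR l else 0) \<partial>lborel)"
  proof (rule ext)
    fix x
    have "(\<lambda>l. indicator {..x} l *\<^sub>R fR l) = (\<lambda>l. if l \<le> x then fR l else 0)"
      by (auto simp: fun_eq_iff split: split_indicator)
    then show "FR x = (\<integral>l. (if l \<le> x then fR l else 0) \<partial>lborel)"
      unfolding FR_def set_lebesgue_integral_def by simp
  qed
  also have "\<dots> \<in> borel_measurable borel" by measurable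
  finally show ?thesis .
qed

lemma beta_borel: "(\<lambda>ux. beta_fn FR fR v t ux u0) \<in> borel_measurable borel"
proof -
  have [measurable]: "(\<lambda>ux. LBINT l=\<bar>ux - u0\<bar>..min (v * t) (ux + u0). fR l * (1 / pi) * arccos ((u0\<^sup>2 - ux\<^sup>2 - l\<^sup>2) / (2 * ux * l)))
      \<in> borel_measurable borel"
    by (rule interval_int_meas) measurable
  show ?thesis unfolding beta_fn_def Let_def by measurable
qed

lemma lambda_borel:
  fixes o' :: "real \<times> real"
  shows "(\<lambda>y. ennreal (lambda_t lam0 FR fR v t (dist y o') u0)) \<in> borel_measurable borel"
proof -
  have [measurable]: "(\<lambda>ux. beta_fn FR fR v t ux u0) \<in> borel_measurable borel" by (rule beta_borel)
  show ?thesis unfolding lambda_t_def by measurable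
qed

end

theorem corollary2:
  fixes P :: "'w measure"
    and N0 :: "'w \<Rightarrow> ((real \<times> real) \<times> (real \<times> real)) measure"
    and o' :: "real \<times> real"
    and lam0 v t u0 :: real
    and FR fR :: "real \<Rightarrow> real"
  assumes lam0: "lam0 > 0" and v: "v > 0" and t: "t \<ge> 0" and u0: "u0 > 0"
    and fR_meas: "fR \<in> borel_measurable lborel"
    and fR_nonneg: "\<And>l. fR l \<ge> 0"
    and fR_neg: "\<And>l. l < 0 \<Longrightarrow> fR l = 0"
    and fR_int: "integrable lborel fR"
    and fR_one: "(\<integral>l. fR l \<partial>lborel) = 1"
    and FR_def: "\<And>x. FR x = (\<integral>l\<in>{..x}. fR l \<partial>lborel)"
    and N0_ppp: "poisson_point_process P
       (density lborel (\<lambda>(x, (theta, l)).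
          ennreal (lam0 * indicator {y. dist y o' > u0} x
                   * (indicator {0..<2*pi} theta / (2*pi)) * fR l)))
       N0"
  shows "poisson_point_process P
       (density lborel (\<lambda>y. ennreal (lambda_t lam0 FR fR v t (dist y o') u0)))
       (\<lambda>w. distr (N0 w) borel (rs_displace v t))"
proof -
  interpret rdist fR FR
    by unfold_locales (use fR_meas fR_nonneg fR_neg fR_int fR_one FR_def in auto)
  define g where "g = (\<lambda>(x, (theta, l)).
          ennreal (lam0 * indicator {y. dist y o' > u0} x
                   * (indicator {0..<2*pi} theta / (2*pi)) * fR l))"
  have g_alt: "g p = ennreal (lam0 * indicator {y. dist y o' > u0} (fst p)
                   * (indicator {0..<2*pi} (fst (snd p)) / (2*pi)) * fR (snd (snd p)))" for p :: "(real \<times> real) \<times> (real \<times> real)"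
    unfolding g_def by (simp add: case_prod_beta)
  have sets_eq: "sets (lborel :: ((real\<times>real)\<times>(real\<times>real)) measure) = sets (borel \<Otimes>\<^sub>M (borel \<Otimes>\<^sub>M borel))"
  proof -
    have e: "borel \<Otimes>\<^sub>M borel = (borel :: (real\<times>real) measure)" by (rule borel_prod)
    show ?thesis unfolding e by (subst borel_prod) simp
  qed
  have gm: "g \<in> borel_measurable lborel"
  proof -
    have "(\<lambda>p. ennreal (lam0 * indicator {y. dist y o' > u0} (fst p)
                   * (indicator {0..<2*pi} (fst (snd p)) / (2*pi)) * fR (snd (snd p)))) \<in> borel_measurable lborel"
      unfolding measurable_cong_sets[OF sets_eq refl] by measurable
    moreover have "g = (\<lambda>p. ennreal (lam0 * indicator {y. dist y o' > u0} (fst p)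
                   * (indicator {0..<2*pi} (fst (snd p)) / (2*pi)) * fR (snd (snd p))))"
      by (rule ext) (rule g_alt)
    ultimately show ?thesis by simp
  qed
  have rs: "rs_displace v t = (\<lambda>p. fst p + min (v * t) (snd (snd p)) *\<^sub>R (cos (fst (snd p)), sin (fst (snd p))))"
    by (auto simp: fun_eq_iff rs_displace_def split: prod.splits)
  have rsm: "rs_displace v t \<in> borel_measurable (lborel :: ((real\<times>real)\<times>(real\<times>real)) measure)"
    unfolding rs by (simp, intro borel_measurable_continuous_onI continuous_intros)
  have hm: "(\<lambda>y. ennreal (lambda_t lam0 FR fR v t (dist y o') u0)) \<in> borel_measurable lborel"
    using lambda_borel[of lam0 v t o' u0] by simp
  show ?thesis
    unfolding g_def[symmetric]
  proof (rule ppp_map)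
    show "poisson_point_process P (density lborel g) N0" using N0_ppp unfolding g_def .
    show "rs_displace v t \<in> density lborel g \<rightarrow>\<^sub>M borel"
      using rsm by (simp add: measurable_cong_sets[OF sets_density refl])
    show "sets (density lborel (\<lambda>y. ennreal (lambda_t lam0 FR fR v t (dist y o') u0))) = sets borel"
      by simp
    fix B :: "(real \<times> real) set" assume B: "B \<in> sets borel"
    have "emeasure (density lborel (\<lambda>y. ennreal (lambda_t lam0 FR fR v t (dist y o') u0))) B
        = (\<integral>\<^sup>+y. ennreal (lambda_t lam0 FR fR v t (dist y o') u0) * indicator B y \<partial>lborel)"
      using B by (intro emeasure_density hm) simp
    also have "\<dots> = (\<integral>\<^sup>+p. ennreal (lam0 * indicator {y. dist y o' > u0} (fst p)
                   * (indicator {0..<2*pi} (fst (snd p)) / (2*pi)) * fR (snd (snd p)))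
             * indicator B (fst p + min (v * t) (snd (snd p)) *\<^sub>R (cos (fst (snd p)), sin (fst (snd p)))) \<partial>lborel)"
      by (rule main_eq[OF lam0 v t u0 B, symmetric])
    also have "\<dots> = (\<integral>\<^sup>+p. g p * indicator (rs_displace v t -` B \<inter> space (density lborel g)) p \<partial>lborel)"
      by (intro nn_integral_cong) (simp add: g_alt rs split: split_indicator)
    also have "\<dots> = emeasure (density lborel g) (rs_displace v t -` B \<inter> space (density lborel g))"
    proof (rule emeasure_density[symmetric, OF gm])
      have "rs_displace v t -` B \<inter> space lborel \<in> sets lborel"
        using rsm B by (intro measurable_sets) simp_all
      then show "rs_displace v t -` B \<inter> space (density lborel g) \<in> sets lborel" by simp
    qed
    finally show "emeasure (density lborel (\<lambda>y. ennreal (lambda_t lam0 FR fR v t (dist y o') u0))) B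
        = emeasure (density lborel g) (rs_displace v t -` B \<inter> space (density lborel g))" .
  qed
qed

end
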